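(* Let $d\ge1$ and let $p\in\mathcal P_d$ be nonzero. Then there exists $z_0\in\mathbb T$ such that, with $e_{j+1}=\frac1{\sqrt d}K_{z_0\nu^j}$ for $j=0,\dots,d-1$: (i) $\{e_j\}_{j=1}^d$ is an orthonormal basis of $\mathcal P_d$; (ii) $p$ is full with respect to this basis; and (iii) the values $\mathcal A_{\{e_j\}}(p)$ are determined by $\mathcal A(p)$, i.e. for every $q\in\mathcal P_d$ with $\mathcal A(q)=\mathcal A(p)$ one has $\mathcal A_{\{e_j\}}(q)=\mathcal A_{\{e_j\}}(p)$.
   Context: $\mathcal P_d$ is the space of complex polynomials of degree at most $d-1$ on the unit circle $\mathbb T$, with inner product $\langle p,q\rangle=\frac1{2\pi}\int_0^{2\pi}p(e^{it})\overline{q(e^{it})}dt$. For $w\in\mathbb T$, $K_w(z)=\sum_{j=0}^{d-1}\overline{w}^jz^j$, so that $\langle p,K_w\rangle=p(w)$. Let $\omega=e^{2\pi i/(2d-1)}$, $\nu=e^{2\pi i/d}$. The map $\mathcal A:\mathcal P_d\to\mathbb R^{6d-3}$ is $(\mathcal A(p))_j=|p(\omega^j)|^2$ ($1\le j\le 2d-1$), $|p(\omega^j)-p(\omega^j\nu)|^2$ ($2d\le j\le4d-2$), $|p(\omega^j)-ip(\omega^j\nu)|^2$ ($4d-1\le j\le 6d-3$). A vector $p$ is full with respect to a basis $\{e_j\}$ if $\langle p,e_j\rangle\ne0$ for all $j$. For a basis $\{e_j\}_{j=1}^d$ of $\mathcal P_d$, let $f_j=e_j$ ($1\le j\le d$),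 $f_j=e_{j-d}-e_{j-d+1}$ ($d+1\le j\le 2d-1$), $f_j=e_{j-(2d-1)}-ie_{j-(2d-1)+1}$ ($2d\le j\le 3d-2$), and $\mathcal A_{\{e_j\}}(q)=(|\langle q,f_j\rangle|^2)_{j=1}^{3d-2}$. *)

theory Defs
  imports "HOL-Analysis.Analysis" "HOL-Computational_Algebra.Polynomial"
begin

definition Pd :: "nat \<Rightarrow> complex poly set" where
  "Pd d = {p. degree p < d}"

definition ip :: "complex poly \<Rightarrow> complex poly \<Rightarrow> complex" where
  "ip p q = integral {0..2*pi} (\<lambda>t::real. poly p (exp (\<i> * of_real t)) * cnj (poly q (exp (\<i> * of_real t))))
            / complex_of_real (2*pi)"

definition Kker :: "nat \<Rightarrow> complex \<Rightarrow> complex poly" where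
  "Kker d w = (\<Sum>j<d. monom (cnj w ^ j) j)"

definition omega :: "nat \<Rightarrow> complex" where
  "omega d = exp (2 * of_real pi * \<i> / of_nat (2*d - 1))"

definition nu :: "nat \<Rightarrow> complex" where
  "nu d = exp (2 * of_real pi * \<i> / of_nat d)"

definition measA :: "nat \<Rightarrow> complex poly \<Rightarrow> nat \<Rightarrow> real" where
  "measA d p j =
    (if 1 \<le> j \<and> j \<le> 2*d - 1 then (cmod (poly p (omega d ^ j)))^2
     else if 2*d \<le> j \<and> j \<le> 4*d - 2 then
       (cmod (poly p (omega d ^ j) - poly p (omega d ^ j * nu d)))^2
     else if 4*d - 1 \<le> j \<and> j \<le> 6*d - 3 then
       (cmod (poly p (omega d ^ j) - \<i> * poly p (omega d ^ j * nu d)))^2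
     else 0)"

definition orthonormal_basis :: "nat \<Rightarrow> (nat \<Rightarrow> complex poly) \<Rightarrow> bool" where
  "orthonormal_basis d e \<longleftrightarrow>
     (\<forall>j\<in>{1..d}. e j \<in> Pd d) \<and>
     (\<forall>i\<in>{1..d}. \<forall>j\<in>{1..d}. ip (e i) (e j) = (if i = j then 1 else 0)) \<and>
     (\<forall>q\<in>Pd d. \<exists>c::nat \<Rightarrow> complex. q = (\<Sum>j\<in>{1..d}. smult (c j) (e j)))"

definition full :: "nat \<Rightarrow> complex poly \<Rightarrow> (nat \<Rightarrow> complex poly) \<Rightarrow> bool" where
  "full d p e \<longleftrightarrow> (\<forall>j\<in>{1..d}. ip p (e j) \<noteq> 0)"

definition fvec :: "nat \<Rightarrow> (nat \<Rightarrow> complex poly) \<Rightarrow> nat \<Rightarrow> complex poly" where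
  "fvec d e j =
    (if 1 \<le> j \<and> j \<le> d then e j
     else if d + 1 \<le> j \<and> j \<le> 2*d - 1 then e (j - d) - e (j - d + 1)
     else if 2*d \<le> j \<and> j \<le> 3*d - 2 then e (j - (2*d - 1)) - smult \<i> (e (j - (2*d - 1) + 1))
     else 0)"

definition measAe :: "nat \<Rightarrow> (nat \<Rightarrow> complex poly) \<Rightarrow> complex poly \<Rightarrow> nat \<Rightarrow> real" where
  "measAe d e q j = (if 1 \<le> j \<and> j \<le> 3*d - 2 then (cmod (ip q (fvec d e j)))^2 else 0)"

definition kbasis :: "nat \<Rightarrow> complex \<Rightarrow> nat \<Rightarrow> complex poly" where
  "kbasis d z0 j = smult (complex_of_real (1 / sqrt (real d))) (Kker d (z0 * nu d ^ (j - 1)))"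

end

theory Submission
  imports Defs
begin

definition rt :: "nat \<Rightarrow> complex" where "rt n = exp (2 * of_real pi * \<i> / of_nat n)"

lemma rt_pow: "rt n ^ k = exp (2 * of_real pi * \<i> * of_nat k / of_nat n)"
  unfolding rt_def by (simp add: exp_of_nat_mult[symmetric] mult_ac)

lemma rt_pow_eq_1: "1 \<le> n \<Longrightarrow> rt n ^ k = 1 \<longleftrightarrow> n dvd k"
  by (simp add: rt_pow complex_root_unity_eq_1)

lemma rt_norm: "cmod (rt n) = 1"
  unfolding rt_def by (simp add: norm_exp_eq_Re)

lemma rt_nz: "rt n \<noteq> 0" unfolding rt_def by simp

lemma rt_inj_aux:
  assumes "1 \<le> n" "i \<le> j" "j < i + n" "rt n ^ i = rt n ^ j"
  shows "i = j"
proof -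
  have "rt n ^ j = rt n ^ i * rt n ^ (j - i)" using assms(2) by (simp add: power_add[symmetric])
  with assms(4) rt_nz have "rt n ^ (j - i) = 1" by simp
  with rt_pow_eq_1 assms(1) have "n dvd (j - i)" by blast
  show ?thesis
  proof (rule ccontr)
    assume "i \<noteq> j"
    then have "0 < j - i" using assms(2) by simp
    with \<open>n dvd (j - i)\<close> have "n \<le> j - i" by (rule dvd_imp_le)
    with assms(2,3) show False by linarith
  qed
qed

lemma rt_inj:
  assumes "1 \<le> n" "s \<le> i" "i < s + n" "s \<le> j" "j < s + n" "rt n ^ i = rt n ^ j"
  shows "i = j"
proof (cases "i \<le> j")
  case True thus ?thesis using rt_inj_aux[of n i j] assms by auto
next
  case False thus ?thesis using rt_inj_aux[of n j i] assms by auto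
qed

lemma omega_rt: "omega d = rt (2*d-1)" unfolding omega_def rt_def by simp
lemma nu_rt: "nu d = rt d" unfolding nu_def rt_def by simp

lemma int_exp:
  fixes n :: int
  shows "((\<lambda>t::real. exp (of_int n * \<i> * of_real t)) has_integral (if n = 0 then complex_of_real (2*pi) else 0)) {0..2*pi}"
proof (cases "n = 0")
  case True
  then show ?thesis using has_integral_const_real[of "1::complex" 0 "2*pi"]
    by (simp add: scaleR_conv_of_real)
next
  case False
  define c where "c = of_int n * \<i>"
  have c: "c \<noteq> 0" using False by (simp add: c_def)
  have "((\<lambda>t::real. exp (c * of_real t) / c) has_vector_derivative exp (c * of_real t)) (at t within {0..2*pi})" for t
    apply (rule has_vector_derivative_real_field[where f="\<lambda>z. exp (c*z)/c"])
    using c by (auto intro!: derivative_eq_intros)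
  then have "((\<lambda>t::real. exp (c * of_real t)) has_integral (exp (c * of_real (2*pi)) / c - exp (c * of_real 0) / c)) {0..2*pi}"
    by (intro fundamental_theorem_of_calculus) auto
  moreover have "exp (c * of_real (2*pi)) = 1"
    using exp_integer_2pi[of "of_int n"] by (simp add: c_def mult_ac)
  ultimately show ?thesis using False by (simp add: c_def)
qed

lemma poly_sum_bound:
  fixes p :: "complex poly"
  assumes "degree p < N"
  shows "poly p x = (\<Sum>k<N. coeff p k * x ^ k)"
proof -
  have "poly p x = (\<Sum>k\<le>degree p. coeff p k * x ^ k)" by (rule poly_altdef)
  also have "\<dots> = (\<Sum>k<N. coeff p k * x ^ k)"
    using assms by (intro sum.mono_neutral_left) (auto simp: coeff_eq_0)
  finally show ?thesis .
qed

lemma ip_formula: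
  assumes "degree p < N" "degree q < N"
  shows "ip p q = (\<Sum>k<N. coeff p k * cnj (coeff q k))"
proof -
  have eq: "poly p (exp (\<i> * of_real t)) * cnj (poly q (exp (\<i> * of_real t)))
      = (\<Sum>m<N. \<Sum>k<N. (coeff p m * cnj (coeff q k)) * exp (of_int (int m - int k) * \<i> * of_real t))" for t::real
  proof -
    have "poly p (exp (\<i> * of_real t)) * cnj (poly q (exp (\<i> * of_real t)))
       = (\<Sum>m<N. coeff p m * exp (\<i> * of_real t) ^ m) * (\<Sum>k<N. cnj (coeff q k) * cnj (exp (\<i> * of_real t)) ^ k)"
      using assms by (simp add: poly_sum_bound[of _ N])
    also have "\<dots> = (\<Sum>m<N. \<Sum>k<N. (coeff p m * cnj (coeff q k)) * (exp (\<i> * of_real t) ^ m * cnj (exp (\<i> * of_real t)) ^ k))"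
      unfolding sum_product
    proof (intro sum.cong refl)
      fix m k
      show "coeff p m * exp (\<i> * of_real t) ^ m * (cnj (coeff q k) * cnj (exp (\<i> * of_real t)) ^ k)
          = (coeff p m * cnj (coeff q k)) * (exp (\<i> * of_real t) ^ m * cnj (exp (\<i> * of_real t)) ^ k)"
        by (simp only: mult_ac)
    qed
    also have "\<dots> = (\<Sum>m<N. \<Sum>k<N. (coeff p m * cnj (coeff q k)) * exp (of_int (int m - int k) * \<i> * of_real t))"
    proof (intro sum.cong refl)
      fix m k
      have "exp (\<i> * of_real t) ^ m * cnj (exp (\<i> * of_real t)) ^ k
          = exp (of_nat m * (\<i> * of_real t)) * exp (of_nat k * (- \<i> * of_real t))"
        by (simp add: exp_of_nat_mult[symmetric] exp_cnj)
      also have "\<dots> = exp (of_int (int m - int k) * \<i> * of_real t)"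
        by (simp add: exp_add[symmetric] algebra_simps)
      finally show "(coeff p m * cnj (coeff q k)) * (exp (\<i> * of_real t) ^ m * cnj (exp (\<i> * of_real t)) ^ k)
           = (coeff p m * cnj (coeff q k)) * exp (of_int (int m - int k) * \<i> * of_real t)" by simp
    qed
    finally show ?thesis .
  qed
  have "((\<lambda>t::real. \<Sum>m<N. \<Sum>k<N. (coeff p m * cnj (coeff q k)) * exp (of_int (int m - int k) * \<i> * of_real t))
      has_integral (\<Sum>m<N. \<Sum>k<N. (coeff p m * cnj (coeff q k)) * (if int m - int k = 0 then complex_of_real (2*pi) else 0))) {0..2*pi}"
    by (intro has_integral_sum finite_lessThan has_integral_mult_right int_exp)
  moreover have "(\<Sum>m<N. \<Sum>k<N. (coeff p m * cnj (coeff q k)) * (if int m - int k = 0 then complex_of_real (2*pi) else 0))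
     = complex_of_real (2*pi) * (\<Sum>k<N. coeff p k * cnj (coeff q k))"
  proof -
    have "(\<Sum>k<N. (coeff p m * cnj (coeff q k)) * (if int m - int k = 0 then complex_of_real (2*pi) else 0))
        = complex_of_real (2*pi) * (coeff p m * cnj (coeff q m))" if "m \<in> {..<N}" for m
    proof -
      have "(\<Sum>k<N. (coeff p m * cnj (coeff q k)) * (if int m - int k = 0 then complex_of_real (2*pi) else 0))
          = (\<Sum>k<N. if k = m then (coeff p m * cnj (coeff q k)) * complex_of_real (2*pi) else 0)"
        by (rule sum.cong) auto
      also have "\<dots> = (coeff p m * cnj (coeff q m)) * complex_of_real (2*pi)"
        using that by (simp add: sum.delta)
      finally show ?thesis by (simp only: mult.commute)
    qed
    then show ?thesis by (simp add: sum_distrib_left)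
  qed
  ultimately have "integral {0..2*pi} (\<lambda>t::real. poly p (exp (\<i> * of_real t)) * cnj (poly q (exp (\<i> * of_real t))))
     = complex_of_real (2*pi) * (\<Sum>k<N. coeff p k * cnj (coeff q k))"
    unfolding eq by (simp add: integral_unique)
  then show ?thesis unfolding ip_def by simp
qed

lemma ip_diff_right: "ip q (a - b) = ip q a - ip q b"
proof -
  define N where "N = Suc (max (degree q) (max (degree a) (degree b)))"
  have d: "degree q < N" "degree a < N" "degree b < N" "degree (a - b) < N"
    unfolding N_def using degree_diff_le_max[of a b] by auto
  show ?thesis using d by (simp add: ip_formula[of _ N] sum_subtractf algebra_simps)
qed

lemma ip_smult_right: "ip q (smult c a) = cnj c * ip q a"
proof -
  define N where "N = Suc (max (degree q) (degree a))"
  have d: "degree q < N" "degree a < N" "degree (smult c a) < N"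
    unfolding N_def by auto
  show ?thesis using d by (simp add: ip_formula[of _ N] sum_distrib_left mult_ac)
qed

lemma coeff_Kker: "coeff (Kker d w) k = (if k < d then cnj w ^ k else 0)"
  unfolding Kker_def by (simp add: coeff_sum coeff_monom)

lemma degree_Kker: "d \<ge> 1 \<Longrightarrow> degree (Kker d w) < d"
proof -
  assume "d \<ge> 1"
  have "degree (Kker d w) \<le> d - 1"
    by (rule degree_le) (auto simp: coeff_Kker)
  with \<open>d \<ge> 1\<close> show ?thesis by linarith
qed

lemma ip_K:
  assumes "d \<ge> 1" "degree q < d"
  shows "ip q (Kker d w) = poly q w"
  using assms by (simp add: ip_formula[of _ d] degree_Kker coeff_Kker poly_sum_bound[of _ d])

lemma degree_kbasis: "d \<ge> 1 \<Longrightarrow> degree (kbasis d z0 j) < d"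
  unfolding kbasis_def using degree_Kker by (meson degree_smult_le le_less_trans)

lemma ip_kbasis:
  assumes "d \<ge> 1" "degree q < d"
  shows "ip q (kbasis d z0 j) = complex_of_real (1 / sqrt (real d)) * poly q (z0 * nu d ^ (j - 1))"
  using assms unfolding kbasis_def by (simp add: ip_smult_right ip_K)

definition reflp :: "nat \<Rightarrow> complex poly \<Rightarrow> complex poly" where
  "reflp d q = (\<Sum>k<d. monom (cnj (coeff q k)) (d - 1 - k))"

lemma degree_reflp: "degree (reflp d q) \<le> d - 1"
  unfolding reflp_def by (intro degree_sum_le) (auto intro: order.trans[OF degree_monom_le])

lemma unit_pow_cnj: "cmod x = 1 \<Longrightarrow> x ^ k * cnj x ^ k = 1"
proof -
  assume "cmod x = 1"
  then have "x * cnj x = 1" using complex_norm_square[of x] by simp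
  then show ?thesis by (metis power_mult_distrib power_one)
qed

lemma poly_reflp:
  assumes "degree q < d" "cmod x = 1"
  shows "poly (reflp d q) x = x ^ (d - 1) * cnj (poly q x)"
proof -
  have "poly (reflp d q) x = (\<Sum>k<d. cnj (coeff q k) * x ^ (d - 1 - k))"
    unfolding reflp_def by (simp add: poly_sum poly_monom)
  also have "\<dots> = (\<Sum>k<d. x ^ (d - 1) * (cnj (coeff q k) * cnj x ^ k))"
  proof (intro sum.cong refl)
    fix k assume "k \<in> {..<d}"
    then have "x ^ (d - 1) = x ^ (d - 1 - k) * x ^ k" by (simp add: power_add[symmetric])
    then have "x ^ (d - 1) * cnj x ^ k = x ^ (d - 1 - k)"
      using unit_pow_cnj[OF assms(2), of k] by (simp add: mult.assoc)
    then show "cnj (coeff q k) * x ^ (d - 1 - k) = x ^ (d - 1) * (cnj (coeff q k) * cnj x ^ k)"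
      by (simp add: mult_ac)
  qed
  also have "\<dots> = x ^ (d - 1) * cnj (poly q x)"
    using assms(1) by (simp add: poly_sum_bound[of _ d] sum_distrib_left)
  finally show ?thesis .
qed

lemma circle_det:
  fixes q p :: "complex poly"
  assumes d: "d \<ge> 1" and dq: "degree q < d" and dp: "degree p < d"
    and h: "\<forall>j\<in>{s..<s+(2*d-1)}. cmod (poly q (omega d ^ j)) = cmod (poly p (omega d ^ j))"
    and x: "cmod x = 1"
  shows "cmod (poly q x) = cmod (poly p x)"
proof -
  define G where "G = q * reflp d q - p * reflp d p"
  have polyG: "poly G y = y ^ (d - 1) * of_real ((cmod (poly q y))^2 - (cmod (poly p y))^2)" if "cmod y = 1" for y
  proof -
    have "poly G y = y ^ (d - 1) * (poly q y * cnj (poly q y) - poly p y * cnj (poly p y))"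
      unfolding G_def using that dq dp by (simp add: poly_reflp algebra_simps)
    then show "poly G y = y ^ (d - 1) * of_real ((cmod (poly q y))^2 - (cmod (poly p y))^2)"
      by (simp only: of_real_diff complex_norm_square)
  qed
  have "degree (q * reflp d q) \<le> 2*d - 2"
    using degree_mult_le[of q "reflp d q"] degree_reflp[of d q] dq by linarith
  moreover have "degree (p * reflp d p) \<le> 2*d - 2"
    using degree_mult_le[of p "reflp d p"] degree_reflp[of d p] dp by linarith
  ultimately have degG: "degree G \<le> 2*d - 2"
    unfolding G_def using degree_diff_le_max[of "q * reflp d q" "p * reflp d p"] by linarith
  define A where "A = (\<lambda>j. omega d ^ j) ` {s..<s+(2*d-1)}"
  have inj: "inj_on (\<lambda>j. omega d ^ j) {s..<s+(2*d-1)}"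
    unfolding inj_on_def omega_rt using rt_inj[of "2*d-1" s] d by auto
  have cardA: "card A = 2*d - 1"
    unfolding A_def using card_image[OF inj] by simp
  have "G = 0"
  proof (rule poly_eqI_degree[of A])
    fix y assume "y \<in> A"
    then obtain j where j: "j \<in> {s..<s+(2*d-1)}" "y = omega d ^ j" unfolding A_def by auto
    have "cmod y = 1" using j(2) by (simp add: omega_rt norm_power rt_norm)
    then show "poly G y = poly 0 y" using polyG h j by simp
  next
    show "degree G < card A" using cardA degG d by linarith
    show "degree 0 < card A" using cardA d by simp
  qed
  then have "x ^ (d - 1) * of_real ((cmod (poly q x))^2 - (cmod (poly p x))^2) = 0"
    using polyG[OF x] by simp
  moreover have "x \<noteq> 0" using x by auto
  ultimately have "complex_of_real ((cmod (poly q x))^2 - (cmod (poly p x))^2) = 0"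
    by (metis mult_eq_0_iff power_eq_0_iff)
  then have "(cmod (poly q x))^2 - (cmod (poly p x))^2 = 0" by (simp only: of_real_eq_0_iff)
  then have "(cmod (poly q x))^2 = (cmod (poly p x))^2" by simp
  then show ?thesis by (simp add: power2_eq_iff_nonneg)
qed

lemma geom_root: "(\<rho>::complex) ^ d = 1 \<Longrightarrow> (\<Sum>j<d. \<rho> ^ j) = (if \<rho> = 1 then of_nat d else 0)"
  by (simp add: sum_gp_strict)

lemma nu_norm: "cmod (nu d) = 1" by (simp add: nu_rt rt_norm)
lemma nu_pow_d: "d \<ge> 1 \<Longrightarrow> nu d ^ d = 1" by (simp add: nu_rt rt_pow_eq_1)

lemma Rlem:
  assumes d: "d \<ge> 1" and ij: "i < d" "j < d" and z: "cmod z0 = 1"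
  shows "(cnj (z0 * nu d ^ i) * (z0 * nu d ^ j)) ^ d = 1"
    and "cnj (z0 * nu d ^ i) * (z0 * nu d ^ j) = 1 \<longleftrightarrow> i = j"
proof -
  have c: "(nu d ^ k) ^ d = 1" for k
    by (metis nu_pow_d[OF d] power_mult mult.commute power_one)
  have c2: "(z0 * nu d ^ k) ^ d = z0 ^ d" for k
    by (simp only: power_mult_distrib c mult_1_right)
  have "(cnj (z0 * nu d ^ i) * (z0 * nu d ^ j)) ^ d = cnj ((z0 * nu d ^ i) ^ d) * (z0 * nu d ^ j) ^ d"
    by (metis power_mult_distrib complex_cnj_power)
  also have "\<dots> = z0 ^ d * cnj z0 ^ d" by (simp only: c2 complex_cnj_power mult.commute)
  also have "\<dots> = 1" by (rule unit_pow_cnj[OF z])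
  finally show "(cnj (z0 * nu d ^ i) * (z0 * nu d ^ j)) ^ d = 1" .
  have a1: "cmod (z0 * nu d ^ i) = 1" using z by (simp add: norm_mult norm_power nu_norm)
  show "cnj (z0 * nu d ^ i) * (z0 * nu d ^ j) = 1 \<longleftrightarrow> i = j"
  proof
    assume "i = j" then show "cnj (z0 * nu d ^ i) * (z0 * nu d ^ j) = 1"
      using unit_pow_cnj[OF a1, of 1] by (simp add: mult.commute)
  next
    assume h: "cnj (z0 * nu d ^ i) * (z0 * nu d ^ j) = 1"
    have "(z0 * nu d ^ i) * cnj (z0 * nu d ^ i) * (z0 * nu d ^ j) = z0 * nu d ^ i"
      using h by (simp add: mult.assoc)
    moreover have "(z0 * nu d ^ i) * cnj (z0 * nu d ^ i) = 1"
      using unit_pow_cnj[OF a1, of 1] by simp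
    ultimately have "z0 * nu d ^ j = z0 * nu d ^ i"
      by (metis mult_1)
    moreover have "z0 \<noteq> 0" using z by auto
    ultimately have "nu d ^ j = nu d ^ i" by simp
    then show "i = j" using rt_inj[of d 0 j i] d ij by (simp add: nu_rt)
  qed
qed

lemma Rsum:
  assumes d: "d \<ge> 1" and ij: "i < d" "j < d" and z: "cmod z0 = 1"
  shows "(\<Sum>k<d. (cnj (z0 * nu d ^ i) * (z0 * nu d ^ j)) ^ k) = (if i = j then of_nat d else 0)"
  using geom_root[OF Rlem(1)[OF assms]] Rlem(2)[OF assms] by simp

lemma poly_Kker: "poly (Kker d w) y = (\<Sum>k<d. (cnj w * y) ^ k)"
  unfolding Kker_def by (simp add: poly_sum poly_monom power_mult_distrib)

lemma sqrt_sq: "d \<ge> 1 \<Longrightarrow> complex_of_real (1 / sqrt (real d)) * complex_of_real (1 / sqrt (real d)) = 1 / of_nat d"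
  by (simp flip: of_real_mult add: of_real_divide[symmetric])

lemma ortho:
  assumes d: "d \<ge> 1" and z: "cmod z0 = 1" and i: "i \<in> {1..d}" and j: "j \<in> {1..d}"
  shows "ip (kbasis d z0 i) (kbasis d z0 j) = (if i = j then 1 else 0)"
proof -
  define s where "s = complex_of_real (1 / sqrt (real d))"
  have "ip (kbasis d z0 i) (kbasis d z0 j) = s * poly (kbasis d z0 i) (z0 * nu d ^ (j - 1))"
    unfolding s_def by (rule ip_kbasis[OF d degree_kbasis[OF d]])
  also have "\<dots> = (s * s) * (\<Sum>k<d. (cnj (z0 * nu d ^ (i - 1)) * (z0 * nu d ^ (j - 1))) ^ k)"
    unfolding kbasis_def s_def by (simp add: poly_Kker)
  also have "\<dots> = (s * s) * (if i - 1 = j - 1 then of_nat d else 0)"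
  proof -
    have "i - 1 < d" "j - 1 < d" using i j by auto
    from Rsum[OF d this z] show ?thesis by simp
  qed
  also have "\<dots> = (if i = j then 1 else 0)"
    using i j d unfolding s_def sqrt_sq[OF d] by auto
  finally show ?thesis .
qed

lemma bsum:
  assumes d: "d \<ge> 1" and mn: "m < d" "n < d" and z: "cmod z0 = 1"
  shows "(\<Sum>j<d. (z0 * nu d ^ j) ^ m * cnj (z0 * nu d ^ j) ^ n) = (if m = n then of_nat d else 0)"
proof -
  define \<rho> where "\<rho> = cnj (1 * nu d ^ n) * (1 * nu d ^ m)"
  have eq: "(z0 * nu d ^ j) ^ m * cnj (z0 * nu d ^ j) ^ n = (z0 ^ m * cnj z0 ^ n) * \<rho> ^ j" for j
  proof -
    have c1: "(nu d ^ j) ^ m = (nu d ^ m) ^ j" by (metis power_mult mult.commute)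
    have c2: "(cnj (nu d) ^ j) ^ n = (cnj (nu d) ^ n) ^ j" by (metis power_mult mult.commute)
    show ?thesis unfolding \<rho>_def
      by (simp only: complex_cnj_mult complex_cnj_power power_mult_distrib c1 c2 mult_1_left mult_ac)
  qed
  have "(\<Sum>j<d. (z0 * nu d ^ j) ^ m * cnj (z0 * nu d ^ j) ^ n) = (\<Sum>j<d. (z0 ^ m * cnj z0 ^ n) * \<rho> ^ j)"
    by (rule sum.cong[OF refl eq])
  also have "\<dots> = (z0 ^ m * cnj z0 ^ n) * (\<Sum>j<d. \<rho> ^ j)"
    by (simp only: sum_distrib_left)
  also have "\<dots> = (z0 ^ m * cnj z0 ^ n) * (if m = n then of_nat d else 0)"
    using geom_root[OF Rlem(1)[OF d mn(2) mn(1) norm_one]] Rlem(2)[OF d mn(2) mn(1) norm_one]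
    unfolding \<rho>_def by (simp add: eq_commute[of n m])
  also have "\<dots> = (if m = n then of_nat d else 0)"
    using unit_pow_cnj[OF z, of n] by simp
  finally show ?thesis .
qed

lemma sum_shift1: "(\<Sum>j\<in>{1..d}. f j) = (\<Sum>j<d. f (Suc j))"
  by (induction d) (simp_all add: sum.cl_ivl_Suc)

lemma span:
  assumes d: "d \<ge> 1" and z: "cmod z0 = 1" and q: "degree q < d"
  shows "q = (\<Sum>j\<in>{1..d}. smult (ip q (kbasis d z0 j)) (kbasis d z0 j))"
proof (rule poly_eqI)
  fix n
  define s where "s = complex_of_real (1 / sqrt (real d))"
  have ipq: "ip q (kbasis d z0 j) = s * poly q (z0 * nu d ^ (j - 1))" for j
    unfolding s_def by (rule ip_kbasis[OF d q])
  have c: "coeff (\<Sum>j\<in>{1..d}. smult (ip q (kbasis d z0 j)) (kbasis d z0 j)) n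
      = (\<Sum>j\<in>{1..d}. ip q (kbasis d z0 j) * coeff (kbasis d z0 j) n)"
    by (simp only: coeff_sum coeff_smult)
  show "coeff q n = coeff (\<Sum>j\<in>{1..d}. smult (ip q (kbasis d z0 j)) (kbasis d z0 j)) n"
  proof (cases "n < d")
    case False
    have "coeff (kbasis d z0 j) n = 0" for j using False unfolding kbasis_def by (simp add: coeff_Kker)
    then show ?thesis using False q c by (simp add: coeff_eq_0)
  next
    case True
    have cf: "coeff (kbasis d z0 j) n = s * cnj (z0 * nu d ^ (j - 1)) ^ n" for j
      using True unfolding kbasis_def s_def by (simp add: coeff_Kker)
    have "(\<Sum>j\<in>{1..d}. ip q (kbasis d z0 j) * coeff (kbasis d z0 j) n)
        = (\<Sum>j\<in>{1..d}. (s * s) * (poly q (z0 * nu d ^ (j - 1)) * cnj (z0 * nu d ^ (j - 1)) ^ n))"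
      by (rule sum.cong[OF refl]) (simp only: cf ipq mult_ac)
    also have "\<dots> = (s * s) * (\<Sum>j<d. poly q (z0 * nu d ^ j) * cnj (z0 * nu d ^ j) ^ n)"
      by (simp only: sum_shift1 diff_Suc_1 sum_distrib_left)
    also have "(\<Sum>j<d. poly q (z0 * nu d ^ j) * cnj (z0 * nu d ^ j) ^ n)
        = (\<Sum>j<d. \<Sum>m<d. coeff q m * ((z0 * nu d ^ j) ^ m * cnj (z0 * nu d ^ j) ^ n))"
      by (rule sum.cong[OF refl]) (simp only: poly_sum_bound[OF q] sum_distrib_right mult.assoc)
    also have "\<dots> = (\<Sum>m<d. coeff q m * (\<Sum>j<d. (z0 * nu d ^ j) ^ m * cnj (z0 * nu d ^ j) ^ n))"
      by (subst sum.swap) (simp only: sum_distrib_left)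
    also have "\<dots> = (\<Sum>m<d. coeff q m * (if m = n then of_nat d else 0))"
    proof (rule sum.cong[OF refl])
      fix m assume "m \<in> {..<d}"
      then have m: "m < d" by simp
      show "coeff q m * (\<Sum>j<d. (z0 * nu d ^ j) ^ m * cnj (z0 * nu d ^ j) ^ n) = coeff q m * (if m = n then of_nat d else 0)"
        by (simp only: bsum[OF d m True z])
    qed
    also have "\<dots> = coeff q n * of_nat d"
      using True by (simp add: if_distrib[of "\<lambda>x. coeff q _ * x"] sum.delta cong: if_cong)
    also have "(s * s) * (coeff q n * of_nat d) = coeff q n"
      using d unfolding s_def sqrt_sq[OF d] by simp
    finally show ?thesis using c by simp
  qed
qed

lemma onb:
  assumes d: "d \<ge> 1" and z: "cmod z0 = 1"
  shows "orthonormal_basis d (kbasis d z0)"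
  unfolding orthonormal_basis_def
proof (intro conjI ballI)
  fix j show "kbasis d z0 j \<in> Pd d" using degree_kbasis[OF d] by (simp add: Pd_def)
next
  fix i j assume "i \<in> {1..d}" "j \<in> {1..d}"
  then show "ip (kbasis d z0 i) (kbasis d z0 j) = (if i = j then 1 else 0)" by (rule ortho[OF d z])
next
  fix q assume "q \<in> Pd d"
  then have dq: "degree q < d" by (simp add: Pd_def)
  show "\<exists>c. q = (\<Sum>j\<in>{1..d}. smult (c j) (kbasis d z0 j))"
    by (rule exI[of _ "\<lambda>j. ip q (kbasis d z0 j)"], rule span[OF d z dq])
qed

lemma parallel_i: "(cmod (u + \<i> * v))^2 = 2 * (cmod u)^2 + 2 * (cmod v)^2 - (cmod (u - \<i> * v))^2"
  by (simp only: cmod_power2) (simp add: power2_eq_square algebra_simps)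

lemma fvec_a: "1 \<le> j \<Longrightarrow> j \<le> d \<Longrightarrow> fvec d e j = e j"
  unfolding fvec_def by simp

lemma fvec_b: "d + 1 \<le> j \<Longrightarrow> j \<le> 2*d - 1 \<Longrightarrow> fvec d e j = e (j - d) - e (j - d + 1)"
  unfolding fvec_def by simp

lemma fvec_c: "d \<ge> 1 \<Longrightarrow> 2*d \<le> j \<Longrightarrow> j \<le> 3*d - 2 \<Longrightarrow>
    fvec d e j = e (j - (2*d - 1)) - smult \<i> (e (j - (2*d - 1) + 1))"
proof -
  assume a: "d \<ge> 1" "2*d \<le> j" "j \<le> 3*d - 2"
  then have "\<not> (1 \<le> j \<and> j \<le> d)" "\<not> (d + 1 \<le> j \<and> j \<le> 2*d - 1)" by auto
  with a show ?thesis unfolding fvec_def by simp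
qed

lemma measAe_eq:
  assumes d: "d \<ge> 1" and z: "cmod z0 = 1" and dq: "degree q < d" and dp: "degree p < d"
    and C1: "\<forall>x. cmod x = 1 \<longrightarrow> cmod (poly q x) = cmod (poly p x)"
    and C2: "\<forall>x. cmod x = 1 \<longrightarrow> cmod (poly q x - poly q (x * nu d)) = cmod (poly p x - poly p (x * nu d))"
    and C3: "\<forall>x. cmod x = 1 \<longrightarrow> cmod (poly q x - \<i> * poly q (x * nu d)) = cmod (poly p x - \<i> * poly p (x * nu d))"
  shows "measAe d (kbasis d z0) q = measAe d (kbasis d z0) p"
proof (rule ext)
  fix j
  define s where "s = complex_of_real (1 / sqrt (real d))"
  define A where "A k = z0 * nu d ^ (k - 1)" for k
  have An: "cmod (A k) = 1" for k unfolding A_def using z by (simp add: norm_mult norm_power nu_norm)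
  have AS: "A (k + 1) = A k * nu d" if kk: "k \<ge> 1" for k
  proof -
    obtain k' where k': "k = Suc k'" using kk by (cases k) auto
    show ?thesis unfolding A_def k' by (simp add: power_Suc2 mult.assoc)
  qed
  have ipr: "ip r (kbasis d z0 k) = s * poly r (A k)" if "degree r < d" for r k
    unfolding s_def A_def by (rule ip_kbasis[OF d that])
  have key: "(cmod (ip q (fvec d (kbasis d z0) j)))^2 = (cmod (ip p (fvec d (kbasis d z0) j)))^2"
    if j: "1 \<le> j" "j \<le> 3*d - 2"
  proof (cases "j \<le> d")
    case True
    have e: "ip r (fvec d (kbasis d z0) j) = s * poly r (A j)" if "degree r < d" for r
      using fvec_a[OF j(1) True] ipr[OF that] by simp
    show ?thesis using C1 An[of j] by (simp add: e[OF dq] e[OF dp] norm_mult)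
  next
    case F1: False
    show ?thesis
    proof (cases "j \<le> 2*d - 1")
      case True
      define k where "k = j - d"
      have k: "k \<ge> 1" "j - d + 1 = k + 1" using F1 unfolding k_def by auto
      have fv: "fvec d (kbasis d z0) j = kbasis d z0 k - kbasis d z0 (k + 1)"
        using fvec_b[of d j "kbasis d z0"] F1 True unfolding k_def by simp
      have e: "ip r (fvec d (kbasis d z0) j) = s * (poly r (A k) - poly r (A k * nu d))" if "degree r < d" for r
        unfolding fv ip_diff_right ipr[OF that] AS[OF k(1)] by (simp only: right_diff_distrib)
      show ?thesis using C2 An[of k] by (simp add: e[OF dq] e[OF dp] norm_mult)
    next
      case False
      define k where "k = j - (2*d - 1)"
      have k: "k \<ge> 1" using False d unfolding k_def by auto
      have fv: "fvec d (kbasis d z0) j = kbasis d z0 k - smult \<i> (kbasis d z0 (k + 1))"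
        using fvec_c[OF d _ j(2), of "kbasis d z0"] False unfolding k_def by simp
      have e: "ip r (fvec d (kbasis d z0) j) = s * (poly r (A k) + \<i> * poly r (A k * nu d))"
        if "degree r < d" for r
        unfolding fv ip_diff_right ip_smult_right ipr[OF that] AS[OF k] by (simp add: algebra_simps)
      have An2: "cmod (A k * nu d) = 1" using An[of k] by (simp add: norm_mult nu_norm)
      have "(cmod (poly q (A k) + \<i> * poly q (A k * nu d)))^2 = (cmod (poly p (A k) + \<i> * poly p (A k * nu d)))^2"
        unfolding parallel_i using C1 C3 An[of k] An2 by simp
      then show ?thesis by (simp add: e[OF dq] e[OF dp] norm_mult power_mult_distrib)
    qed
  qed
  show "measAe d (kbasis d z0) q j = measAe d (kbasis d z0) p j"
    unfolding measAe_def using key by simp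
qed

lemma exists_z0:
  fixes p :: "complex poly"
  assumes p: "p \<noteq> 0" and d: "d \<ge> 1"
  shows "\<exists>z0. cmod z0 = 1 \<and> (\<forall>k<d. poly p (z0 * nu d ^ k) \<noteq> 0)"
proof -
  define B where "B = (\<Union>k\<in>{..<d}. {z. poly p (z * nu d ^ k) = 0})"
  have nz: "nu d ^ k \<noteq> 0" for k by (simp add: nu_rt rt_nz)
  have sub: "{z. poly p (z * nu d ^ k) = 0} \<subseteq> (\<lambda>y. y / nu d ^ k) ` {y. poly p y = 0}" for k
  proof
    fix z assume "z \<in> {z. poly p (z * nu d ^ k) = 0}"
    then have "poly p (z * nu d ^ k) = 0" by simp
    moreover have "z = (z * nu d ^ k) / nu d ^ k" using nz[of k] by simp
    ultimately show "z \<in> (\<lambda>y. y / nu d ^ k) ` {y. poly p y = 0}" by blast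
  qed
  have "finite {z. poly p (z * nu d ^ k) = 0}" for k
    by (rule finite_subset[OF sub finite_imageI[OF poly_roots_finite[OF p]]])
  then have finB: "finite B" unfolding B_def by (intro finite_UN_I) auto
  define n where "n = Suc (card B)"
  have cR: "card {z::complex. z ^ n = 1} = n" by (rule card_roots_unity_eq) (simp add: n_def)
  have "\<not> {z::complex. z ^ n = 1} \<subseteq> B"
  proof
    assume "{z::complex. z ^ n = 1} \<subseteq> B"
    from card_mono[OF finB this] cR show False unfolding n_def by simp
  qed
  then obtain z where z: "z ^ n = 1" "z \<notin> B" by blast
  have "cmod z ^ n = 1 ^ n" using z(1) by (simp add: norm_power[symmetric])
  then have "cmod z = 1" by (rule power_eq_imp_eq_base) (auto simp: n_def)
  moreover have "\<forall>k<d. poly p (z * nu d ^ k) \<noteq> 0" using z(2) unfolding B_def by blast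
  ultimately show ?thesis by blast
qed

lemma sq_cmod_eq: "(cmod a)^2 = (cmod b)^2 \<Longrightarrow> cmod a = cmod b"
  by (simp add: power2_eq_iff_nonneg)

theorem mainTheorem5:
  fixes d :: nat and p :: "complex poly"
  assumes "d \<ge> 1" and "p \<in> Pd d" and "p \<noteq> 0"
  shows "\<exists>z0. cmod z0 = 1 \<and>
           orthonormal_basis d (kbasis d z0) \<and>
           full d p (kbasis d z0) \<and>
           (\<forall>q\<in>Pd d. measA d q = measA d p \<longrightarrow> measAe d (kbasis d z0) q = measAe d (kbasis d z0) p)"
proof -
  have d: "d \<ge> 1" and dp: "degree p < d" using assms by (auto simp: Pd_def)
  obtain z0 where z: "cmod z0 = 1" and nz: "\<forall>k<d. poly p (z0 * nu d ^ k) \<noteq> 0"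
    using exists_z0[OF assms(3) d] by blast
  have full: "full d p (kbasis d z0)"
    unfolding full_def
  proof
    fix j assume j: "j \<in> {1..d}"
    have "poly p (z0 * nu d ^ (j - 1)) \<noteq> 0" using nz j by auto
    moreover have "complex_of_real (1 / sqrt (real d)) \<noteq> 0" using d by simp
    ultimately show "ip p (kbasis d z0 j) \<noteq> 0" by (simp add: ip_kbasis[OF d dp])
  qed
  have main: "measAe d (kbasis d z0) q = measAe d (kbasis d z0) p"
    if q: "q \<in> Pd d" and eq: "measA d q = measA d p" for q
  proof -
    have dq: "degree q < d" using q by (simp add: Pd_def)
    define sh where "sh r = pcompose r [:0, nu d:]" for r
    have dsh: "degree (sh r) = degree r" for r
      unfolding sh_def by (simp add: degree_pcompose nu_rt rt_nz)
    have psh: "poly (sh r) x = poly r (x * nu d)" for r x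
      unfolding sh_def by (simp add: poly_pcompose mult.commute)
    have m: "measA d q j = measA d p j" for j using eq by simp
    have C1: "\<forall>x. cmod x = 1 \<longrightarrow> cmod (poly q x) = cmod (poly p x)"
    proof (intro allI impI)
      fix x :: complex assume x: "cmod x = 1"
      show "cmod (poly q x) = cmod (poly p x)"
      proof (rule circle_det[OF d dq dp _ x, of 1])
        show "\<forall>j\<in>{1..<1+(2*d-1)}. cmod (poly q (omega d ^ j)) = cmod (poly p (omega d ^ j))"
        proof
          fix j assume j: "j \<in> {1..<1+(2*d-1)}"
          show "cmod (poly q (omega d ^ j)) = cmod (poly p (omega d ^ j))"
          proof -
            have c1: "1 \<le> j \<and> j \<le> 2*d - 1" using j d by auto
            show ?thesis using m[of j] by (intro sq_cmod_eq) (simp only: measA_def if_P[OF c1])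
          qed
        qed
      qed
    qed
    have C2: "\<forall>x. cmod x = 1 \<longrightarrow> cmod (poly q x - poly q (x * nu d)) = cmod (poly p x - poly p (x * nu d))"
    proof (intro allI impI)
      fix x :: complex assume x: "cmod x = 1"
      have "cmod (poly (q - sh q) x) = cmod (poly (p - sh p) x)"
      proof (rule circle_det[OF d _ _ _ x, of _ _ "2*d"])
        show "degree (q - sh q) < d" using dq dsh[of q] degree_diff_le_max[of q "sh q"] by simp
        show "degree (p - sh p) < d" using dp dsh[of p] degree_diff_le_max[of p "sh p"] by simp
        show "\<forall>j\<in>{2*d..<2*d+(2*d-1)}. cmod (poly (q - sh q) (omega d ^ j)) = cmod (poly (p - sh p) (omega d ^ j))"
        proof
          fix j assume j: "j \<in> {2*d..<2*d+(2*d-1)}"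
          show "cmod (poly (q - sh q) (omega d ^ j)) = cmod (poly (p - sh p) (omega d ^ j))"
          proof -
            have c1: "\<not> (1 \<le> j \<and> j \<le> 2*d - 1)" "2*d \<le> j \<and> j \<le> 4*d - 2" using j d by auto
            show ?thesis using m[of j] by (intro sq_cmod_eq) (simp only: measA_def if_not_P[OF c1(1)] if_P[OF c1(2)] poly_diff psh)
          qed
        qed
      qed
      then show "cmod (poly q x - poly q (x * nu d)) = cmod (poly p x - poly p (x * nu d))"
        by (simp add: psh)
    qed
    have C3: "\<forall>x. cmod x = 1 \<longrightarrow> cmod (poly q x - \<i> * poly q (x * nu d)) = cmod (poly p x - \<i> * poly p (x * nu d))"
    proof (intro allI impI)
      fix x :: complex assume x: "cmod x = 1"
      have "cmod (poly (q - smult \<i> (sh q)) x) = cmod (poly (p - smult \<i> (sh p)) x)"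
      proof (rule circle_det[OF d _ _ _ x, of _ _ "4*d-1"])
        show "degree (q - smult \<i> (sh q)) < d" using dq dsh[of q] degree_diff_le_max[of q "smult \<i> (sh q)"] degree_smult_le[of \<i> "sh q"] by simp
        show "degree (p - smult \<i> (sh p)) < d" using dp dsh[of p] degree_diff_le_max[of p "smult \<i> (sh p)"] degree_smult_le[of \<i> "sh p"] by simp
        show "\<forall>j\<in>{4*d-1..<4*d-1+(2*d-1)}. cmod (poly (q - smult \<i> (sh q)) (omega d ^ j)) = cmod (poly (p - smult \<i> (sh p)) (omega d ^ j))"
        proof
          fix j assume j: "j \<in> {4*d-1..<4*d-1+(2*d-1)}"
          show "cmod (poly (q - smult \<i> (sh q)) (omega d ^ j)) = cmod (poly (p - smult \<i> (sh p)) (omega d ^ j))"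
          proof -
            have c1: "\<not> (1 \<le> j \<and> j \<le> 2*d - 1)" "\<not> (2*d \<le> j \<and> j \<le> 4*d - 2)" "4*d - 1 \<le> j \<and> j \<le> 6*d - 3" using j d by auto
            show ?thesis using m[of j] by (intro sq_cmod_eq) (simp only: measA_def if_not_P[OF c1(1)] if_not_P[OF c1(2)] if_P[OF c1(3)] poly_diff poly_smult psh)
          qed
        qed
      qed
      then show "cmod (poly q x - \<i> * poly q (x * nu d)) = cmod (poly p x - \<i> * poly p (x * nu d))"
        by (simp add: psh)
    qed
    show ?thesis by (rule measAe_eq[OF d z dq dp C1 C2 C3])
  qed
  show ?thesis using z onb[OF d z] full main by blast
qed

end
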